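(* For every $x\in\Delta\setminus\partial\Delta$, $p(x)=\nabla H\cdot F(x)=2\sum_{i,j\in\mathbb{V}:\,x_{ij}>0}x_{ij}\big(y_{ij}-N_i(x)\big)^2$, where $N_i(x)=\sum_{k:\,x_{ik}>0}\frac{x_{ik}}{x_i}y_{ik}$ and $p(x)=\sum_{i,j,k:\,x_{ij},x_{ik}>0}\frac{x_{ij}x_{ik}}{x_i}(y_{ij}-y_{ik})^2$.
   Context: Let $G=(\mathbb{V},E)$ be a finite graph with adjacency $\sim$. Let $a_{ij}=a_{ji}\ge0$ ($>0$ only if $i\sim j$) and $p_{ij}=p_{ji}\in[0,1]$ ($=0$ if $i\not\sim j$), with some $a_{ij}p_{ij}>0$. Fix $h_1\in(0,1]$; $\Delta$ is the set of arrays $x=(x_{ij})$ with $x_{ij}=x_{ji}\ge0$, $x_{ij}=0$ if $i\not\sim j$, $\sum_{i,j}x_{ij}=1$, $\sum_{(i,j):a_{ij}p_{ij}>0}x_{ij}\ge h_1$; $x_i=\sum_jx_{ij}$. $\partial\Delta$: the $x\in\Delta$ such that some vertex $i$ having a neighbour $j$ with $a_{ij}p_{ij}>0$ has $\sum_{j:a_{ij}p_{ij}>0}x_{ij}=0$. $H(x)=\sum_{(i,j):x_{ij}>0}a_{ij}p_{ij}x_{ij}^2/(x_ix_j)$; $y_{ij}=a_{ij}p_{ij}x_{ij}/(x_ix_j)$ ($0$ if $a_{ij}p_{ij}=0$); $F(x)_{ij}=x_{ij}(y_{ij}-H(x))$ ($0$ if $x_{ij}=0$). $\nabla H\cdot F=\sum_{i,j}\frac{\partial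 H}{\partial x_{ij}}F_{ij}$, with $H$ regarded as a function of the ordered-pair variables $x_{ij}$ ($x_{ij},x_{ji}$ independent, $x_i=\sum_jx_{ij}$). *)

theory Defs
  imports "HOL-Analysis.Analysis"
begin

definition xv :: "('v::finite \<Rightarrow> 'v \<Rightarrow> real) \<Rightarrow> 'v \<Rightarrow> real" where
  "xv x i = (\<Sum>j\<in>UNIV. x i j)"

definition in_Delta ::
  "('v::finite \<Rightarrow> 'v \<Rightarrow> bool) \<Rightarrow> ('v \<Rightarrow> 'v \<Rightarrow> real) \<Rightarrow> ('v \<Rightarrow> 'v \<Rightarrow> real) \<Rightarrow> real
   \<Rightarrow> ('v \<Rightarrow> 'v \<Rightarrow> real) \<Rightarrow> bool" where
  "in_Delta adj a p h1 x \<longleftrightarrow>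
     (\<forall>i j. x i j = x j i) \<and> (\<forall>i j. 0 \<le> x i j) \<and> (\<forall>i j. \<not> adj i j \<longrightarrow> x i j = 0) \<and>
     (\<Sum>i\<in>UNIV. \<Sum>j\<in>UNIV. x i j) = 1 \<and>
     (\<Sum>(i,j)\<in>{(i,j). a i j * p i j > 0}. x i j) \<ge> h1"

definition in_bdry_Delta ::
  "('v::finite \<Rightarrow> 'v \<Rightarrow> bool) \<Rightarrow> ('v \<Rightarrow> 'v \<Rightarrow> real) \<Rightarrow> ('v \<Rightarrow> 'v \<Rightarrow> real) \<Rightarrow> real
   \<Rightarrow> ('v \<Rightarrow> 'v \<Rightarrow> real) \<Rightarrow> bool" where
  "in_bdry_Delta adj a p h1 x \<longleftrightarrow> in_Delta adj a p h1 x \<and>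
     (\<exists>i. (\<exists>j. adj i j \<and> a i j * p i j > 0) \<and> (\<Sum>j\<in>{j. a i j * p i j > 0}. x i j) = 0)"

definition Hf :: "('v::finite \<Rightarrow> 'v \<Rightarrow> real) \<Rightarrow> ('v \<Rightarrow> 'v \<Rightarrow> real) \<Rightarrow> ('v \<Rightarrow> 'v \<Rightarrow> real) \<Rightarrow> real" where
  "Hf a p x = (\<Sum>(i,j)\<in>{(i,j). x i j > 0}. a i j * p i j * (x i j)^2 / (xv x i * xv x j))"

definition yf :: "('v::finite \<Rightarrow> 'v \<Rightarrow> real) \<Rightarrow> ('v \<Rightarrow> 'v \<Rightarrow> real) \<Rightarrow> ('v \<Rightarrow> 'v \<Rightarrow> real) \<Rightarrow> 'v \<Rightarrow> 'v \<Rightarrow> real" where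
  "yf a p x i j = (if a i j * p i j = 0 then 0 else a i j * p i j * x i j / (xv x i * xv x j))"

definition Ff :: "('v::finite \<Rightarrow> 'v \<Rightarrow> real) \<Rightarrow> ('v \<Rightarrow> 'v \<Rightarrow> real) \<Rightarrow> ('v \<Rightarrow> 'v \<Rightarrow> real) \<Rightarrow> 'v \<Rightarrow> 'v \<Rightarrow> real" where
  "Ff a p x i j = (if x i j = 0 then 0 else x i j * (yf a p x i j - Hf a p x))"

definition Nf :: "('v::finite \<Rightarrow> 'v \<Rightarrow> real) \<Rightarrow> ('v \<Rightarrow> 'v \<Rightarrow> real) \<Rightarrow> ('v \<Rightarrow> 'v \<Rightarrow> real) \<Rightarrow> 'v \<Rightarrow> real" where
  "Nf a p x i = (\<Sum>k\<in>{k. x i k > 0}. x i k / xv x i * yf a p x i k)"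

definition pf :: "('v::finite \<Rightarrow> 'v \<Rightarrow> real) \<Rightarrow> ('v \<Rightarrow> 'v \<Rightarrow> real) \<Rightarrow> ('v \<Rightarrow> 'v \<Rightarrow> real) \<Rightarrow> real" where
  "pf a p x = (\<Sum>(i,j,k)\<in>{(i,j,k). x i j > 0 \<and> x i k > 0}.
                 x i j * x i k / xv x i * (yf a p x i j - yf a p x i k)^2)"

text \<open>Partial derivative of H with respect to the ordered-pair variable x_ij
  (all other x_kl fixed, x_i = sum_j x_ij recomputed).\<close>
definition dHf :: "('v::finite \<Rightarrow> 'v \<Rightarrow> real) \<Rightarrow> ('v \<Rightarrow> 'v \<Rightarrow> real) \<Rightarrow> ('v \<Rightarrow> 'v \<Rightarrow> real) \<Rightarrow> 'v \<Rightarrow> 'v \<Rightarrow> real" where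
  "dHf a p x i j = deriv (\<lambda>t. Hf a p (x(i := (x i)(j := t)))) (x i j)"

definition gradH_dot_F :: "('v::finite \<Rightarrow> 'v \<Rightarrow> real) \<Rightarrow> ('v \<Rightarrow> 'v \<Rightarrow> real) \<Rightarrow> ('v \<Rightarrow> 'v \<Rightarrow> real) \<Rightarrow> real" where
  "gradH_dot_F a p x = (\<Sum>i\<in>UNIV. \<Sum>j\<in>UNIV. dHf a p x i j * Ff a p x i j)"

end

theory Submission
  imports Defs
begin

lemma term_deriv:
  fixes c f0 d gk gl ek el t0 :: real
  assumes "gk \<noteq> 0" "gl \<noteq> 0"
  shows "((\<lambda>t. c * (f0 + d*(t - t0))^2 / ((gk + ek*(t-t0)) * (gl + el*(t-t0))))
     has_real_derivative
     (2*c*f0*d/(gk*gl) - c*f0^2*ek/(gk^2*gl) - c*f0^2*el/(gk*gl^2))) (at t0)"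
  using assms
  apply -
  apply (rule derivative_eq_intros refl | simp)+
  apply (simp add: field_simps power2_eq_square)
  done

lemma quad_lemma:
  fixes w y :: "'a \<Rightarrow> real"
  assumes "finite A" "\<And>j. j \<in> A \<Longrightarrow> w j > 0"
  defines "W \<equiv> sum w A"
  defines "N \<equiv> (\<Sum>k\<in>A. w k / W * y k)"
  shows "(\<Sum>j\<in>A. \<Sum>k\<in>A. w j * w k / W * (y j - y k)^2) = 2 * (\<Sum>j\<in>A. w j * (y j - N)^2)"
    and "(\<Sum>j\<in>A. (2 * y j - 2 * N) * w j * (y j - H)) = 2 * (\<Sum>j\<in>A. w j * (y j - N)^2)"
proof -
  have key: "(\<Sum>j\<in>A. w j * (y j - N)) = 0"
  proof (cases "A = {}")
    case True then show ?thesis by simp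
  next
    case False
    then have "W > 0" unfolding W_def using assms(1,2) by (simp add: sum_pos)
    have "(\<Sum>j\<in>A. w j * (y j - N)) = (\<Sum>j\<in>A. w j * y j) - N * W"
      by (simp add: right_diff_distrib sum_subtractf sum_distrib_left W_def mult.commute)
    also have "N * W = (\<Sum>j\<in>A. w j * y j)"
      unfolding N_def sum_distrib_right using \<open>W>0\<close> by (intro sum.cong) auto
    finally show ?thesis by simp
  qed
  have e1: "(\<Sum>j\<in>A. (2 * y j - 2 * N) * w j * (y j - H)) = 2 * (\<Sum>j\<in>A. w j * (y j - N)^2)
     + 2 * (N - H) * (\<Sum>j\<in>A. w j * (y j - N))"
    by (simp add: sum_distrib_left sum.distrib[symmetric] power2_eq_square algebra_simps)
  show "(\<Sum>j\<in>A. (2 * y j - 2 * N) * w j * (y j - H)) = 2 * (\<Sum>j\<in>A. w j * (y j - N)^2)"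
    using e1 key by simp
  have e2: "(\<Sum>j\<in>A. \<Sum>k\<in>A. w j * w k / W * (y j - y k)^2) =
     (\<Sum>j\<in>A. \<Sum>k\<in>A. w j * w k / W * ((y j - N)^2 + (y k - N)^2 - 2 * (y j - N) * (y k - N)))"
    by (intro sum.cong refl) (simp add: power2_eq_square algebra_simps)
  also have "\<dots> = 2 * (\<Sum>j\<in>A. w j * (y j - N)^2) - 2 / W * (\<Sum>j\<in>A. w j * (y j - N)) ^ 2"
  proof (cases "A = {}")
    case True then show ?thesis by simp
  next
    case False
    then have "W > 0" unfolding W_def using assms(1,2) by (simp add: sum_pos)
    have s1: "(\<Sum>j\<in>A. \<Sum>k\<in>A. w j * w k / W * (y j - N)^2) = (\<Sum>j\<in>A. w j * (y j - N)^2)"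
    proof -
      have "(\<Sum>j\<in>A. \<Sum>k\<in>A. w j * w k / W * (y j - N)^2) = (\<Sum>j\<in>A. w j * (y j - N)^2 / W * W)"
        by (intro sum.cong refl) (simp add: sum_distrib_left[symmetric] sum_divide_distrib[symmetric] W_def algebra_simps sum_distrib_right[symmetric])
      then show ?thesis using \<open>W>0\<close> by simp
    qed
    have s2: "(\<Sum>j\<in>A. \<Sum>k\<in>A. w j * w k / W * (y k - N)^2) = (\<Sum>j\<in>A. w j * (y j - N)^2)"
      using s1 sum.swap[of "\<lambda>j k. w j * w k / W * (y k - N)^2" A A]
      by (simp add: mult.commute mult.left_commute)
    have s3: "(\<Sum>j\<in>A. \<Sum>k\<in>A. w j * w k / W * (2 * (y j - N) * (y k - N))) = 2 / W * (\<Sum>j\<in>A. w j * (y j - N)) ^ 2"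
      by (simp add: power2_eq_square sum_distrib_left sum_distrib_right algebra_simps)
    have "(\<Sum>j\<in>A. \<Sum>k\<in>A. w j * w k / W * ((y j - N)^2 + (y k - N)^2 - 2 * (y j - N) * (y k - N)))
      = (\<Sum>j\<in>A. \<Sum>k\<in>A. w j * w k / W * (y j - N)^2) + (\<Sum>j\<in>A. \<Sum>k\<in>A. w j * w k / W * (y k - N)^2)
        - (\<Sum>j\<in>A. \<Sum>k\<in>A. w j * w k / W * (2 * (y j - N) * (y k - N)))"
      by (simp only: sum.distrib[symmetric] sum_subtractf[symmetric] distrib_left right_diff_distrib)
    then show ?thesis using s1 s2 s3 by simp
  qed
  finally show "(\<Sum>j\<in>A. \<Sum>k\<in>A. w j * w k / W * (y j - y k)^2) = 2 * (\<Sum>j\<in>A. w j * (y j - N)^2)"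
    using key by simp
qed

lemma pair_sum:
  fixes f :: "'v::finite \<Rightarrow> 'v \<Rightarrow> real"
  shows "(\<Sum>(i,j)\<in>{(i,j). P i j}. f i j) = (\<Sum>i\<in>UNIV. \<Sum>j\<in>{j. P i j}. f i j)"
proof -
  have "{(i,j). P i j} = Sigma UNIV (\<lambda>i. {j. P i j})" by auto
  then show ?thesis by (simp add: sum.Sigma)
qed

lemma triple_sum:
  fixes f :: "'v::finite \<Rightarrow> 'v \<Rightarrow> 'v \<Rightarrow> real"
  shows "(\<Sum>(i,j,k)\<in>{(i,j,k). P i j \<and> P i k}. f i j k) = (\<Sum>i\<in>UNIV. \<Sum>j\<in>{j. P i j}. \<Sum>k\<in>{k. P i k}. f i j k)"
proof -
  have "{(i,j,k). P i j \<and> P i k} = Sigma UNIV (\<lambda>i. {j. P i j} \<times> {k. P i k})" by auto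
  then have "(\<Sum>(i,j,k)\<in>{(i,j,k). P i j \<and> P i k}. f i j k) = (\<Sum>i\<in>UNIV. \<Sum>(j,k)\<in>{j. P i j} \<times> {k. P i k}. f i j k)"
    by (simp add: sum.Sigma split_def)
  also have "\<dots> = (\<Sum>i\<in>UNIV. \<Sum>j\<in>{j. P i j}. \<Sum>k\<in>{k. P i k}. f i j k)"
    by (simp add: sum.cartesian_product)
  finally show ?thesis .
qed

lemma yf_eq: "yf a p x k l = a k l * p k l * x k l / (xv x k * xv x l)"
  by (simp add: yf_def)

lemma X_ge:
  fixes x :: "'v::finite \<Rightarrow> 'v \<Rightarrow> real"
  assumes "\<forall>k l. 0 \<le> x k l"
  shows "x k l \<le> xv x k"
  unfolding xv_def using assms by (intro member_le_sum) auto

lemma X_Si: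
  fixes x :: "'v::finite \<Rightarrow> 'v \<Rightarrow> real"
  assumes "\<forall>k l. 0 \<le> x k l"
  shows "xv x k = sum (x k) {l. x k l > 0}"
  unfolding xv_def using assms
  by (intro sum.mono_neutral_right) (auto simp: less_le)

lemma dH:
  fixes x :: "'v::finite \<Rightarrow> 'v \<Rightarrow> real"
  assumes sym: "\<forall>k l. x k l = x l k" and nonneg: "\<forall>k l. 0 \<le> x k l"
    and asym: "\<And>k l. a k l = a l k" and psym: "\<And>k l. p k l = p l k"
    and pos: "x i j > 0"
  shows "dHf a p x i j = 2 * yf a p x i j - 2 * Nf a p x i"
proof -
  define x' where "x' t = x(i := (x i)(j := t))" for t
  define S where "S = {(k,l). x k l > 0}"
  define X where "X = xv x"
  define c where "c k l = a k l * p k l" for k l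
  define d where "d k l = (if k = i \<and> l = j then 1 else 0::real)" for k l
  define e where "e k = (if k = i then 1 else 0::real)" for k
  define G where "G t = (\<Sum>(k,l)\<in>S. c k l * (x k l + d k l * (t - x i j))^2 / ((X k + e k * (t - x i j)) * (X l + e l * (t - x i j))))" for t
  have x'_eq: "x' t k l = x k l + d k l * (t - x i j)" for t k l by (simp add: x'_def d_def)
  have xv'_eq: "xv (x' t) k = X k + e k * (t - x i j)" for t k
  proof -
    have h: "\<And>P c. (if P then 1 else 0) * (c::real) = (if P then c else 0)" by simp
    show ?thesis by (simp add: xv_def X_def x'_eq sum.distrib d_def e_def h)
  qed
  have HG: "Hf a p (x' t) = G t" if "t \<in> {0<..}" for t
  proof -
    have set: "{(k,l). x' t k l > 0} = S"
      using that pos by (auto simp: S_def x'_def split: if_splits)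
    show ?thesis unfolding Hf_def G_def set
      by (intro sum.cong refl) (auto simp: x'_eq xv'_eq c_def)
  qed
  have Xpos: "X k > 0 \<and> X l > 0" if "(k,l) \<in> S" for k l
  proof -
    have "x k l > 0" "x l k > 0" using that sym by (auto simp: S_def)
    then show ?thesis using X_ge[OF nonneg, of k l] X_ge[OF nonneg, of l k] by (auto simp: X_def)
  qed
  define T1 where "T1 = (\<lambda>(k,l). 2*c k l*x k l*d k l/(X k*X l))"
  define T2 where "T2 = (\<lambda>(k,l). c k l*(x k l)^2*e k/((X k)^2*X l))"
  define T3 where "T3 = (\<lambda>(k,l). c k l*(x k l)^2*e l/(X k*(X l)^2))"
  have DG: "(G has_real_derivative (\<Sum>n\<in>S. T1 n - T2 n - T3 n)) (at (x i j))"
    unfolding G_def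
    apply (rule DERIV_sum)
    apply (clarsimp simp: T1_def T2_def T3_def)
    apply (rule term_deriv)
    using Xpos by fastforce+
  have DH: "((\<lambda>t. Hf a p (x' t)) has_real_derivative (\<Sum>n\<in>S. T1 n - T2 n - T3 n)) (at (x i j))"
    by (rule has_field_derivative_transform_within_open[OF DG, of "{0<..}"]) (use pos HG in auto)
  have dval: "dHf a p x i j = (\<Sum>n\<in>S. T1 n - T2 n - T3 n)"
    unfolding dHf_def using DERIV_imp_deriv[OF DH] by (simp add: x'_def)
  have ijS: "(i,j) \<in> S" using pos by (simp add: S_def)
  have s1: "(\<Sum>n\<in>S. T1 n) = 2 * yf a p x i j"
  proof -
    have "(\<Sum>n\<in>S. T1 n) = (\<Sum>n\<in>S. if n = (i,j) then 2 * yf a p x i j else 0)"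
      by (intro sum.cong refl) (auto simp: T1_def d_def yf_eq c_def X_def split: if_splits)
    then show ?thesis using ijS by simp
  qed
  have s2: "(\<Sum>n\<in>S. T2 n) = Nf a p x i"
  proof -
    have "(\<Sum>n\<in>S. T2 n) = (\<Sum>k\<in>UNIV. \<Sum>l\<in>{l. x k l > 0}. c k l*(x k l)^2*e k/((X k)^2*X l))"
      unfolding S_def T2_def by (rule pair_sum)
    also have "\<dots> = (\<Sum>k\<in>UNIV. if k = i then (\<Sum>l\<in>{l. x i l > 0}. c i l*(x i l)^2/((X i)^2*X l)) else 0)"
      by (intro sum.cong refl) (auto simp: e_def)
    also have "\<dots> = (\<Sum>l\<in>{l. x i l > 0}. c i l*(x i l)^2/((X i)^2*X l))" by simp
    also have "\<dots> = Nf a p x i"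
      unfolding Nf_def by (intro sum.cong refl) (simp add: yf_eq c_def X_def power2_eq_square mult_ac)
    finally show ?thesis .
  qed
  have s3: "(\<Sum>n\<in>S. T3 n) = (\<Sum>n\<in>S. T2 n)"
    apply (rule sum.reindex_bij_witness[of S prod.swap prod.swap])
    using sym asym psym by (auto simp: S_def T2_def T3_def c_def)
  show ?thesis using dval s1 s2 s3 by (simp add: sum_subtractf)
qed

theorem lemma2:
  fixes adj :: "'v::finite \<Rightarrow> 'v \<Rightarrow> bool"
    and a p x :: "'v \<Rightarrow> 'v \<Rightarrow> real" and h1 :: real
  assumes adj_sym: "\<And>i j. adj i j \<longleftrightarrow> adj j i"
    and a_sym: "\<And>i j. a i j = a j i" and a_nonneg: "\<And>i j. 0 \<le> a i j"
    and a_adj: "\<And>i j. a i j > 0 \<Longrightarrow> adj i j"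
    and p_sym: "\<And>i j. p i j = p j i" and p_range: "\<And>i j. 0 \<le> p i j \<and> p i j \<le> 1"
    and p_adj: "\<And>i j. \<not> adj i j \<Longrightarrow> p i j = 0"
    and ap_pos: "\<exists>i j. a i j * p i j > 0"
    and h1: "0 < h1" "h1 \<le> 1"
    and xD: "in_Delta adj a p h1 x"
    and x_nb: "\<not> in_bdry_Delta adj a p h1 x"
  shows "pf a p x = gradH_dot_F a p x \<and>
         gradH_dot_F a p x =
           2 * (\<Sum>(i,j)\<in>{(i,j). x i j > 0}. x i j * (yf a p x i j - Nf a p x i)^2)"
proof -
  have sym: "\<forall>k l. x k l = x l k" and nonneg: "\<forall>k l. 0 \<le> x k l"
    using xD by (auto simp: in_Delta_def)
  define Si where "Si k = {l. x k l > 0}" for k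
  have XS: "xv x k = sum (x k) (Si k)" for k unfolding Si_def by (rule X_Si[OF nonneg])
  have NS: "Nf a p x k = (\<Sum>l\<in>Si k. x k l / sum (x k) (Si k) * yf a p x k l)" for k
    unfolding Nf_def Si_def[symmetric] XS ..
  have wpos: "\<And>l. l \<in> Si k \<Longrightarrow> x k l > 0" for k by (simp add: Si_def)
  have rhs: "(\<Sum>(i,j)\<in>{(i,j). x i j > 0}. x i j * (yf a p x i j - Nf a p x i)^2)
      = (\<Sum>i\<in>UNIV. \<Sum>j\<in>Si i. x i j * (yf a p x i j - Nf a p x i)^2)"
    unfolding Si_def by (rule pair_sum)
  have P: "pf a p x = 2 * (\<Sum>(i,j)\<in>{(i,j). x i j > 0}. x i j * (yf a p x i j - Nf a p x i)^2)"
  proof -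
    have "pf a p x = (\<Sum>i\<in>UNIV. \<Sum>j\<in>Si i. \<Sum>k\<in>Si i. x i j * x i k / sum (x i) (Si i) * (yf a p x i j - yf a p x i k)^2)"
      unfolding pf_def Si_def XS[unfolded Si_def] by (rule triple_sum)
    also have "\<dots> = (\<Sum>i\<in>UNIV. 2 * (\<Sum>j\<in>Si i. x i j * (yf a p x i j - Nf a p x i)^2))"
      by (intro sum.cong refl, unfold NS, rule quad_lemma(1)) (auto simp: Si_def)
    finally show ?thesis using rhs by (simp add: sum_distrib_left)
  qed
  have G: "gradH_dot_F a p x = 2 * (\<Sum>(i,j)\<in>{(i,j). x i j > 0}. x i j * (yf a p x i j - Nf a p x i)^2)"
  proof -
    have "gradH_dot_F a p x = (\<Sum>i\<in>UNIV. \<Sum>j\<in>Si i. dHf a p x i j * Ff a p x i j)"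
      unfolding gradH_dot_F_def
      by (intro sum.cong refl sum.mono_neutral_right) (auto simp: Si_def Ff_def less_le nonneg)
    also have "\<dots> = (\<Sum>i\<in>UNIV. \<Sum>j\<in>Si i. (2 * yf a p x i j - 2 * Nf a p x i) * x i j * (yf a p x i j - Hf a p x))"
      by (intro sum.cong refl) (auto simp: Si_def Ff_def dH[OF sym nonneg a_sym p_sym])
    also have "\<dots> = (\<Sum>i\<in>UNIV. 2 * (\<Sum>j\<in>Si i. x i j * (yf a p x i j - Nf a p x i)^2))"
      by (intro sum.cong refl, unfold NS, rule quad_lemma(2)) (auto simp: Si_def)
    finally show ?thesis using rhs by (simp add: sum_distrib_left)
  qed
  show ?thesis using P G by simp
qed

end
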